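(* Let $c=0$, so $f_0(z)=z^2$. For $z_0\in\mathbb{C}$ and $q\in(0,1)$ let $(z_q(n))_{n\ge0}$ be the fractional-order Julia sequence defined by $z_q(0)=z_0$ and $$z_q(n)=z_0+\frac{1}{\Gamma(q)}\sum_{i=1}^{n}\frac{\Gamma(n-i+q)}{\Gamma(n-i+1)}\,f_0\big(z_q(i-1)\big),\qquad n\ge1.$$ Then as $q\downarrow 0$ the sequence becomes $z_0,\ z_0^2+z_0,\ (z_0^2+z_0)^2+z_0,\dots$, i.e. for every $n\ge0$, $\lim_{q\downarrow0}z_q(n)=P_{z_0}^{\,n+1}(0)$, where $P_{a}(w)=w^2+a$. Hence the fractional-order filled Julia set for $c=0$ (the set of $z_0$ for which $(z_q(n))$ remains bounded) coincides, in the limit $q\downarrow0$, with the classical Mandelbrot set $\{a\in\mathbb{C}: (P_a^{\,n}(0))_{n\ge1}\text{ bounded}\}$.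
   Context: The recursion is the numerical solution of the Caputo-like fractional difference initial value problem $\Delta^q z(t)=f_c(z(t+q-1))$, $t\in\mathbb{N}_{1-q}$, $z(0)=z_0$, of order $q\in(0,1)$, with $f_c(z)=z^2+c$; for fixed $c$ and variable initial point $z_0$ it defines the fractional-order (filled) Julia map. $\Gamma$ is Euler's Gamma function. *)

theory Defs
  imports "HOL-Analysis.Analysis"
begin

function frac_julia0 :: "real \<Rightarrow> complex \<Rightarrow> nat \<Rightarrow> complex" where
  "frac_julia0 q z0 0 = z0"
| "frac_julia0 q z0 (Suc m) =
     z0 + complex_of_real (1 / Gamma q) *
       (\<Sum>i\<in>{1..Suc m}.
          complex_of_real (Gamma (real (Suc m - i) + q) / Gamma (real (Suc m - i) + 1))
          * (frac_julia0 q z0 (i - 1))\<^sup>2)"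
  by pat_completeness auto
termination
  by (relation "Wellfounded.measure (\<lambda>(q, z0, n). n)") auto

definition quad_poly :: "complex \<Rightarrow> complex \<Rightarrow> complex" where
  "quad_poly a w = w\<^sup>2 + a"

definition mandelbrot_set :: "complex set" where
  "mandelbrot_set = {a. bounded (range (\<lambda>n::nat. (quad_poly a ^^ (Suc n)) 0))}"

end

theory Submission
  imports Defs
begin

lemma fj_split:
  assumes q: "q > 0"
  shows "frac_julia0 q z0 (Suc m) = z0 + (frac_julia0 q z0 m)\<^sup>2 +
     complex_of_real (rGamma q) *
       (\<Sum>i\<in>{1..m}.
          complex_of_real (Gamma (real (Suc m - i) + q) / Gamma (real (Suc m - i) + 1))
          * (frac_julia0 q z0 (i - 1))\<^sup>2)"
proof -
  have G: "Gamma q \<noteq> 0" using Gamma_real_pos[OF q] by simp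
  have "{1..Suc m} = insert (Suc m) {1..m}" by auto
  then have "(\<Sum>i\<in>{1..Suc m}.
          complex_of_real (Gamma (real (Suc m - i) + q) / Gamma (real (Suc m - i) + 1))
          * (frac_julia0 q z0 (i - 1))\<^sup>2) =
        complex_of_real (Gamma q) * (frac_julia0 q z0 m)\<^sup>2 +
        (\<Sum>i\<in>{1..m}.
          complex_of_real (Gamma (real (Suc m - i) + q) / Gamma (real (Suc m - i) + 1))
          * (frac_julia0 q z0 (i - 1))\<^sup>2)" by simp
  moreover have "complex_of_real (rGamma q) * complex_of_real (Gamma q) = 1"
    using G by (simp add: rGamma_inverse_Gamma flip: of_real_mult)
  ultimately show ?thesis
    by (simp only: frac_julia0.simps(2) distrib_left mult.assoc[symmetric]) (simp add: rGamma_inverse_Gamma of_real_inverse divide_inverse)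
qed

lemma coef_lim:
  assumes "k \<ge> 1"
  shows "((\<lambda>q::real. Gamma (real k + q) / Gamma (real k + 1)) \<longlongrightarrow>
           Gamma (real k) / Gamma (real k + 1)) (at_right 0)"
proof -
  have "isCont Gamma (real k + 0)"
    using assms by (intro isCont_Gamma) (auto elim!: nonpos_Ints_cases)
  moreover have "((\<lambda>q::real. real k + q) \<longlongrightarrow> real k + 0) (at_right 0)"
    by (intro tendsto_intros)
  ultimately have "((\<lambda>q::real. Gamma (real k + q)) \<longlongrightarrow> Gamma (real k + 0)) (at_right 0)"
    by (rule isCont_tendsto_compose)
  moreover have "Gamma (real k + 1) \<noteq> 0"
  proof -
    have "Gamma (real k + 1) > 0" by (rule Gamma_real_pos) simp
    then show ?thesis by linarith
  qed
  ultimately show ?thesis by (intro tendsto_divide tendsto_const) auto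
qed

lemma fj_lim:
  "((\<lambda>q. frac_julia0 q z0 n) \<longlongrightarrow> (quad_poly z0 ^^ (n + 1)) 0) (at_right 0)"
proof (induction n rule: less_induct)
  case (less n)
  show ?case
  proof (cases n)
    case 0
    then show ?thesis by (simp add: quad_poly_def)
  next
    case (Suc m)
    let ?S = "\<lambda>q. (\<Sum>i\<in>{1..m}.
          complex_of_real (Gamma (real (Suc m - i) + q) / Gamma (real (Suc m - i) + 1))
          * (frac_julia0 q z0 (i - 1))\<^sup>2)"
    have ev: "eventually (\<lambda>q. z0 + (frac_julia0 q z0 m)\<^sup>2 + complex_of_real (rGamma q) * ?S q
              = frac_julia0 q z0 n) (at_right 0)"
      unfolding Suc
      by (intro eventually_at_rightI[of 0 1]) (auto simp: fj_split simp del: frac_julia0.simps)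
    have Sc: "((\<lambda>q. ?S q) \<longlongrightarrow>
        (\<Sum>i\<in>{1..m}. complex_of_real (Gamma (real (Suc m - i)) / Gamma (real (Suc m - i) + 1))
          * ((quad_poly z0 ^^ (i - 1 + 1)) 0)\<^sup>2)) (at_right 0)"
    proof (intro tendsto_sum tendsto_mult tendsto_power)
      fix i assume i: "i \<in> {1..m}"
      show "((\<lambda>q. frac_julia0 q z0 (i - 1)) \<longlongrightarrow> (quad_poly z0 ^^ (i - 1 + 1)) 0) (at_right 0)"
        using less.IH[of "i - 1"] i Suc by (auto simp del: funpow.simps)
      show "((\<lambda>q. complex_of_real (Gamma (real (Suc m - i) + q) / Gamma (real (Suc m - i) + 1)))
         \<longlongrightarrow> complex_of_real (Gamma (real (Suc m - i)) / Gamma (real (Suc m - i) + 1))) (at_right 0)"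
        using i by (intro tendsto_of_real coef_lim) auto
    qed
    have R: "((\<lambda>q::real. complex_of_real (rGamma q)) \<longlongrightarrow> complex_of_real (rGamma 0)) (at_right 0)"
    proof -
      have "(rGamma \<longlongrightarrow> rGamma (0::real)) (at 0)"
        using continuous_on_rGamma[of UNIV] continuous_on_def[of UNIV rGamma] by (metis UNIV_I)
      then have "(rGamma \<longlongrightarrow> rGamma (0::real)) (at_right 0)"
        by (rule tendsto_within_subset) simp
      then show ?thesis by (rule tendsto_of_real)
    qed
    have M: "((\<lambda>q. frac_julia0 q z0 m) \<longlongrightarrow> (quad_poly z0 ^^ (m + 1)) 0) (at_right 0)"
      using less.IH[of m] Suc by auto
    have "((\<lambda>q. z0 + (frac_julia0 q z0 m)\<^sup>2 + complex_of_real (rGamma q) * ?S q) \<longlongrightarrow>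
          z0 + ((quad_poly z0 ^^ (m + 1)) 0)\<^sup>2 + complex_of_real (rGamma 0) *
        (\<Sum>i\<in>{1..m}. complex_of_real (Gamma (real (Suc m - i)) / Gamma (real (Suc m - i) + 1))
          * ((quad_poly z0 ^^ (i - 1 + 1)) 0)\<^sup>2)) (at_right 0)"
      by (intro tendsto_intros M R Sc)
    then have "((\<lambda>q. z0 + (frac_julia0 q z0 m)\<^sup>2 + complex_of_real (rGamma q) * ?S q) \<longlongrightarrow>
          (quad_poly z0 ^^ (n + 1)) 0) (at_right 0)"
      by (simp add: Suc quad_poly_def add.commute)
    then show ?thesis using tendsto_cong[OF ev] by simp
  qed
qed

theorem proposition2:
  shows "(\<forall>z0::complex. \<forall>n::nat.
           ((\<lambda>q. frac_julia0 q z0 n) \<longlongrightarrow> (quad_poly z0 ^^ (n + 1)) 0) (at_right 0))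
         \<and> {z0::complex. bounded (range (\<lambda>n::nat. Lim (at_right 0) (\<lambda>q. frac_julia0 q z0 n)))}
             = mandelbrot_set"
proof
  show "\<forall>z0::complex. \<forall>n::nat.
           ((\<lambda>q. frac_julia0 q z0 n) \<longlongrightarrow> (quad_poly z0 ^^ (n + 1)) 0) (at_right 0)"
    using fj_lim by blast
  have "Lim (at_right 0) (\<lambda>q. frac_julia0 q z0 n) = (quad_poly z0 ^^ (Suc n)) 0" for z0 n
    using tendsto_Lim[OF trivial_limit_at_right_real] fj_lim[of z0 n]
    by (metis Suc_eq_plus1 tendsto_Lim trivial_limit_at_right_real)
  then show "{z0::complex. bounded (range (\<lambda>n::nat. Lim (at_right 0) (\<lambda>q. frac_julia0 q z0 n)))}
             = mandelbrot_set"
    by (simp add: mandelbrot_set_def)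
qed

end
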